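(* Let $n\geq3$ and let $S_n$ act on $V=\mathbb{C}^n$ by its natural permutation representation. The pre-Drinfeld orbifold algebra maps for this action are exactly the linear $2$-cochains $\kappa^L=\kappa^L_1+\kappa^L_{\mathrm{tri}}$, where $\kappa^L_{\mathrm{tri}}$ is as defined below for some $a,b\in\mathbb{C}$ and $\kappa^L_1$ is supported on the identity with $\kappa^L_1(e_i,e_j)=a_1(e_i-e_j)$ for some $a_1\in\mathbb{C}$.
   Context: $S_n$ acts by $\sigma e_i=e_{\sigma(i)}$; $V^g$ is the fixed space of $g$; $\mathrm{Alt}_3$ is the set of cyclic permutations of $\{1,2,3\}$. A linear $2$-cochain is $\alpha=\sum_g\alpha_gg$ with $\alpha_g:\bigwedge^2V\to V$ linear; it is $S_n$-invariant if $h(\alpha_g(v,w))=\alpha_{hgh^{-1}}(hv,hw)$. A pre-Drinfeld orbifold algebra map is an $S_n$-invariant linear 2-cochain $\kappa^L$ with $\operatorname{im}\kappa^L_g\subseteq V^g$ for all $g$ and $\sum_{\sigma\in\mathrm{Alt}_3}\kappa^L_g(v_{\sigma(2)},v_{\sigma(3)})(gv_{\sigma(1)}-v_{\sigma(1)})=0$ in $S(V)$ for all $g,v_1,v_2,v_3$. $\kappa^L_{\mathrm{tri}}$ is the linear 2-cochain supported on 3-cycles with, for each 3-cycle $(ijk)$, $\kappa^L_{(ijk)}(e_i,e_j)=\kappa^L_{(ijk)}(e_j,e_k)=\kappa^L_{(ijk)}(e_k,e_i)=a(e_i+e_j+e_k)+b\sum_{l\notin\{i,j,k\}}e_l$ and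 $\kappa^L_{(ijk)}(e_l,e_m)=0$ whenever $e_l$ or $e_m$ lies in $V^{(ijk)}$. *)

theory Defs
  imports "HOL-Analysis.Analysis"
begin

text \<open>V = C^n, realised as complex ^ 'n with the finite index type 'n (n = CARD('n)).
  S_n = permutations of the index type.\<close>

type_synonym 'n cochain = "('n \<Rightarrow> 'n) \<Rightarrow> complex^'n \<Rightarrow> complex^'n \<Rightarrow> complex^'n"

definition ebas :: "'n::finite \<Rightarrow> complex^'n" where
  "ebas i = (\<chi> k. if k = i then 1 else 0)"

definition csmul :: "complex \<Rightarrow> complex^'n::finite \<Rightarrow> complex^'n" where
  "csmul c v = (\<chi> k. c * v $ k)"

text \<open>Permutation action: sigma e_i = e_(sigma i).\<close>
definition pact :: "('n::finite \<Rightarrow> 'n) \<Rightarrow> complex^'n \<Rightarrow> complex^'n" where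
  "pact \<sigma> v = (\<chi> k. v $ (inv \<sigma> k))"

definition clinear_map :: "(complex^'n::finite \<Rightarrow> complex^'n) \<Rightarrow> bool" where
  "clinear_map f \<longleftrightarrow> (\<forall>u v. f (u + v) = f u + f v) \<and> (\<forall>c v. f (csmul c v) = csmul c (f v))"

text \<open>A linear map \<And>^2 V \<rightarrow> V, i.e. an alternating bilinear map.\<close>
definition alt_bilinear :: "(complex^'n::finite \<Rightarrow> complex^'n \<Rightarrow> complex^'n) \<Rightarrow> bool" where
  "alt_bilinear f \<longleftrightarrow> (\<forall>v. clinear_map (f v)) \<and> (\<forall>w. clinear_map (\<lambda>v. f v w)) \<and> (\<forall>v. f v v = 0)"

text \<open>Product u*w of two vectors in S^2(V), represented as the symmetric tensor
  u \<otimes> w + w \<otimes> u (faithful embedding of S^2(V) in V \<otimes> V in characteristic 0).\<close>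
definition sprod :: "complex^'n::finite \<Rightarrow> complex^'n \<Rightarrow> complex^'n^'n" where
  "sprod u w = (\<chi> i j. u $ i * w $ j + u $ j * w $ i)"

definition pre_DOA_map :: "'n::finite cochain \<Rightarrow> bool" where
  "pre_DOA_map \<kappa> \<longleftrightarrow>
     (\<forall>g. g permutes (UNIV::'n set) \<longrightarrow> alt_bilinear (\<kappa> g)) \<and>
     (\<forall>g h v w. g permutes (UNIV::'n set) \<longrightarrow> h permutes (UNIV::'n set) \<longrightarrow>
        pact h (\<kappa> g v w) = \<kappa> (h \<circ> g \<circ> inv h) (pact h v) (pact h w)) \<and>
     (\<forall>g v w. g permutes (UNIV::'n set) \<longrightarrow> pact g (\<kappa> g v w) = \<kappa> g v w) \<and>
     (\<forall>g v1 v2 v3. g permutes (UNIV::'n set) \<longrightarrow>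
        sprod (\<kappa> g v2 v3) (pact g v1 - v1) + sprod (\<kappa> g v3 v1) (pact g v2 - v2)
          + sprod (\<kappa> g v1 v2) (pact g v3 - v3) = 0)"

definition is_3cycle :: "('n \<Rightarrow> 'n) \<Rightarrow> 'n \<Rightarrow> 'n \<Rightarrow> 'n \<Rightarrow> bool" where
  "is_3cycle g i j k \<longleftrightarrow> distinct [i, j, k] \<and> g i = j \<and> g j = k \<and> g k = i \<and>
     (\<forall>l. l \<notin> {i, j, k} \<longrightarrow> g l = l)"

text \<open>Values on basis pairs (e_l, e_m) of kappa_1 + kappa_tri.\<close>
definition kbasis :: "complex \<Rightarrow> complex \<Rightarrow> complex \<Rightarrow> ('n::finite \<Rightarrow> 'n) \<Rightarrow> 'n \<Rightarrow> 'n \<Rightarrow> complex^'n" where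
  "kbasis a b a1 g l m =
     (if g = id then csmul a1 (ebas l - ebas m)
      else if (\<exists>i j k. is_3cycle g i j k) then
        (let T = (\<chi> k. if g k \<noteq> k then a else b) in
         if g l = l \<or> g m = m then 0
         else if m = g l then T
         else if l = g m then - T
         else 0)
      else 0)"

definition kform :: "complex \<Rightarrow> complex \<Rightarrow> complex \<Rightarrow> 'n::finite cochain" where
  "kform a b a1 g v w = (\<Sum>l\<in>UNIV. \<Sum>m\<in>UNIV. csmul (v $ l * w $ m) (kbasis a b a1 g l m))"

end

theory Submission imports Defs begin

lemma csmul_comp[simp]: "csmul c v $ k = c * v $ k" by (simp add: csmul_def)
lemma pact_comp[simp]: "pact g v $ k = v $ inv g k" by (simp add: pact_def)
lemma ebas_comp: "ebas i $ k = (if k = i then 1 else 0)" by (simp add: ebas_def)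
lemma sprod_comp[simp]: "sprod u w $ i $ j = u $ i * w $ j + u $ j * w $ i" by (simp add: sprod_def)

lemma pact_ebas: "g permutes UNIV \<Longrightarrow> pact g (ebas x) = ebas (g x)"
  unfolding vec_eq_iff by (auto simp: ebas_comp permutes_inverses)

lemma fixed_comp: assumes "g permutes UNIV" "pact g P = P" shows "P $ (g x) = P $ x"
proof -
  have "pact g P $ (g x) = P $ (g x)" using assms(2) by simp
  thus ?thesis using assms(1) by (simp add: permutes_inverses)
qed

context fixes f :: "complex^'n::finite \<Rightarrow> complex^'n \<Rightarrow> complex^'n"
  assumes ab: "alt_bilinear f"
begin
lemma ab_addl: "f (u + v) w = f u w + f v w"
  using ab unfolding alt_bilinear_def clinear_map_def by blast
lemma ab_addr: "f w (u + v) = f w u + f w v"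
  using ab unfolding alt_bilinear_def clinear_map_def by blast
lemma ab_smull: "f (csmul c u) w = csmul c (f u w)"
  using ab unfolding alt_bilinear_def clinear_map_def by blast
lemma ab_smulr: "f w (csmul c u) = csmul c (f w u)"
  using ab unfolding alt_bilinear_def clinear_map_def by blast
lemma ab_diag: "f v v = 0"
  using ab unfolding alt_bilinear_def by blast
lemma ab_zerol: "f 0 w = 0"
  using ab_addl[of 0 0 w] by simp
lemma ab_zeror: "f w 0 = 0"
  using ab_addr[of w 0 0] by simp
lemma ab_neg_l: "f (- u) w = - f u w"
proof -
  have "f u w + f (- u) w = 0" using ab_addl[of u "-u" w] ab_zerol by simp
  thus ?thesis by (simp add: add_eq_0_iff)
qed
lemma ab_neg_r: "f w (- u) = - f w u"
proof -
  have "f w u + f w (- u) = 0" using ab_addr[of w u "-u"] ab_zeror by simp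
  thus ?thesis by (simp add: add_eq_0_iff)
qed
lemma ab_diffl: "f (u - v) w = f u w - f v w"
  using ab_addl[of u "-v" w] ab_neg_l by simp
lemma ab_diffr: "f w (u - v) = f w u - f w v"
  using ab_addr[of w u "-v"] ab_neg_r by simp
lemma ab_antisym: "f v w = - f w v"
proof -
  have e: "f (v + w) (v + w) = f v v + f v w + (f w v + f w w)" by (simp add: ab_addl ab_addr)
  have "f v w + f w v = 0" using e ab_diag[of "v+w"] ab_diag[of v] ab_diag[of w]
    by (metis add.left_neutral add.right_neutral)
  thus ?thesis by (simp add: eq_neg_iff_add_eq_0)
qed
lemma ab_suml: "finite A \<Longrightarrow> f (\<Sum>l\<in>A. u l) w = (\<Sum>l\<in>A. f (u l) w)"
  by (induction A rule: finite_induct) (auto simp: ab_zerol ab_addl)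
lemma ab_sumr: "finite A \<Longrightarrow> f w (\<Sum>l\<in>A. u l) = (\<Sum>l\<in>A. f w (u l))"
  by (induction A rule: finite_induct) (auto simp: ab_zeror ab_addr)
end

lemma vec_expand: "v = (\<Sum>l\<in>UNIV. csmul (v $ l) (ebas (l::'n::finite)))"
  unfolding vec_eq_iff by (simp add: sum_component ebas_comp if_distrib cong: if_cong)

lemma csmul_csmul: "csmul a (csmul b v) = csmul (a*b) v"
  unfolding vec_eq_iff by simp

lemma csmul_sum: "csmul c (\<Sum>l\<in>A. u l) = (\<Sum>l\<in>A. csmul c (u l))"
  unfolding vec_eq_iff by (simp add: sum_component sum_distrib_left)

lemma ab_expand: assumes "alt_bilinear f"
  shows "f v w = (\<Sum>l\<in>UNIV. \<Sum>m\<in>UNIV. csmul (v $ l * w $ m) (f (ebas l) (ebas m)))"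
proof -
  have "f v w = f (\<Sum>l\<in>UNIV. csmul (v $ l) (ebas l)) (\<Sum>m\<in>UNIV. csmul (w $ m) (ebas m))"
    using vec_expand[of v] vec_expand[of w] by simp
  also have "\<dots> = (\<Sum>l\<in>UNIV. \<Sum>m\<in>UNIV. csmul (v $ l * w $ m) (f (ebas l) (ebas m)))"
    apply (simp add: ab_suml[OF assms] ab_sumr[OF assms] ab_smull[OF assms] ab_smulr[OF assms]
        csmul_csmul csmul_sum mult.commute)
    by (rule sum.swap)
  finally show ?thesis .
qed

definition ip :: "complex^'n::finite \<Rightarrow> complex^'n \<Rightarrow> complex" where
  "ip u v = (\<Sum>k\<in>UNIV. u $ k * v $ k)"

lemma ip_ebas2[simp]: "ip u (ebas y) = u $ y"
  by (simp add: ip_def ebas_comp if_distrib cong: if_cong)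
lemma ip_ebas1[simp]: "ip (ebas y) u = u $ y"
proof -
  have "(\<lambda>k. ebas y $ k * u $ k) = (\<lambda>k. if k = y then u $ k else 0)"
    by (auto simp: ebas_comp)
  hence "ip (ebas y) u = (\<Sum>k\<in>UNIV. if k = y then u $ k else 0)" unfolding ip_def by (rule arg_cong)
  thus ?thesis by simp
qed
lemma ip_add2[simp]: "ip u (v + w) = ip u v + ip u w"
  by (simp add: ip_def ring_distribs sum.distrib)
lemma ip_diff2[simp]: "ip u (v - w) = ip u v - ip u w"
  by (simp add: ip_def ring_distribs sum_subtractf)
lemma ip_add1[simp]: "ip (v + w) u = ip v u + ip w u"
  by (simp add: ip_def ring_distribs sum.distrib)
lemma ip_diff1[simp]: "ip (v - w) u = ip v u - ip w u"
  by (simp add: ip_def ring_distribs sum_subtractf)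
lemma ip_csmul2[simp]: "ip u (csmul c v) = c * ip u v"
  by (simp add: ip_def sum_distrib_left mult.left_commute)
lemma ip_zero1[simp]: "ip 0 u = 0"
  by (simp add: ip_def)

lemma perm_conj: "g permutes UNIV \<Longrightarrow> h permutes UNIV \<Longrightarrow> (h \<circ> g \<circ> inv h) permutes UNIV"
  by (intro permutes_compose permutes_inv) auto

lemma perm_self_conj: "g permutes UNIV \<Longrightarrow> g \<circ> g \<circ> inv g = g"
  by (simp add: fun_eq_iff permutes_inverses)


lemma inj_g: "g permutes UNIV \<Longrightarrow> g x = g y \<longleftrightarrow> x = y"
  by (metis permutes_inj injD)

abbreviation tr :: "'a \<Rightarrow> 'a \<Rightarrow> 'a \<Rightarrow> 'a" where "tr \<equiv> Transposition.transpose"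

lemma third_point:
  assumes "CARD('n::finite) \<ge> 3"
  shows "\<exists>r::'n. r \<noteq> p \<and> r \<noteq> q"
proof -
  have "card ({p, q}::'n set) \<le> 2" by (simp add: card_insert_le_m1)
  hence "card (UNIV - {p, q}::'n set) \<ge> 1" using assms by (simp add: card_Diff_subset)
  hence "UNIV - {p, q} \<noteq> ({}::'n set)" by (intro notI) simp
  thus ?thesis by auto
qed

lemma three_points:
  assumes "CARD('n::finite) \<ge> 3"
  shows "\<exists>p q r::'n. distinct [p, q, r]"
proof -
  obtain p :: 'n where True by simp
  obtain q :: 'n where q: "q \<noteq> p" using third_point[OF assms, of p p] by auto
  obtain r :: 'n where r: "r \<noteq> p" "r \<noteq> q" using third_point[OF assms, of p q] by auto
  show ?thesis using q r by (intro exI[of _ p] exI[of _ q] exI[of _ r]) auto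
qed

lemma tr_step:
  assumes f: "f permutes UNIV"
  shows "(tr (f a) b \<circ> f) permutes UNIV" "(tr (f a) b \<circ> f) a = b"
    "f x \<noteq> f a \<Longrightarrow> f x \<noteq> b \<Longrightarrow> (tr (f a) b \<circ> f) x = f x"
  using f by (auto intro: permutes_compose permutes_swap_id)

lemma perm3:
  assumes d1: "distinct [p, q, r]" and d2: "distinct [i, j, k]"
  shows "\<exists>h. h permutes UNIV \<and> h p = i \<and> h q = j \<and> h r = k"
proof -
  define h1 where "h1 = tr (id p) i \<circ> id"
  have h1: "h1 permutes UNIV" "h1 p = i" using tr_step[of id p i] unfolding h1_def by auto
  define h2 where "h2 = tr (h1 q) j \<circ> h1"
  have h2: "h2 permutes UNIV" "h2 q = j" using tr_step[OF h1(1), of q j] unfolding h2_def by auto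
  have "h1 q \<noteq> h1 p" using d1 h1(1) by (auto simp: inj_g)
  hence h2p: "h2 p = i" using tr_step(3)[OF h1(1), of q j p] d2 h1(2) unfolding h2_def by auto
  define h3 where "h3 = tr (h2 r) k \<circ> h2"
  have h3: "h3 permutes UNIV" "h3 r = k" using tr_step[OF h2(1), of r k] unfolding h3_def by auto
  have "h2 p \<noteq> h2 r" "h2 q \<noteq> h2 r" using d1 h2(1) by (auto simp: inj_g)
  moreover have "h2 p \<noteq> k" "h2 q \<noteq> k" using d2 h2p h2(2) by auto
  ultimately have "h3 p = i" "h3 q = j"
    using tr_step(3)[OF h2(1), of p r k] tr_step(3)[OF h2(1), of q r k] h2p h2(2)
    unfolding h3_def by auto
  thus ?thesis using h3 by blast
qed

definition c0 :: "'a \<Rightarrow> 'a \<Rightarrow> 'a \<Rightarrow> 'a \<Rightarrow> 'a" where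
  "c0 p q r = tr p q \<circ> tr q r"

lemma c0_3cycle: "distinct [p, q, r] \<Longrightarrow> is_3cycle (c0 p q r) p q r"
proof -
  assume d: "distinct [p, q, r]"
  have "\<forall>l. l \<notin> {p, q, r} \<longrightarrow> (tr p q \<circ> tr q r) l = l" by simp
  moreover have "r \<noteq> p" "r \<noteq> q" "q \<noteq> p" using d by auto
  ultimately show ?thesis unfolding is_3cycle_def c0_def using d by simp
qed

lemma c0_perm: "c0 p q r permutes UNIV"
  unfolding c0_def by (intro permutes_compose permutes_swap_id) auto

lemma is3_facts:
  assumes "is_3cycle g i j k"
  shows "distinct [i, j, k]" "g i = j" "g j = k" "g k = i"
    "\<And>l. l \<noteq> i \<Longrightarrow> l \<noteq> j \<Longrightarrow> l \<noteq> k \<Longrightarrow> g l = l"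
  using assms unfolding is_3cycle_def by blast+

lemma is3_perm_moved: assumes "is_3cycle g i j k" "g x \<noteq> x" shows "x = i \<or> x = j \<or> x = k"
proof (rule ccontr)
  assume "\<not> (x = i \<or> x = j \<or> x = k)"
  hence "g x = x" using is3_facts(5)[OF assms(1), of x] by simp
  thus False using assms(2) by simp
qed

lemma is3_rot: assumes "is_3cycle g i j k" shows "is_3cycle g j k i"
proof -
  note F = is3_facts[OF assms]
  have "distinct [j, k, i]" using F(1) by auto
  moreover have "\<forall>l. l \<notin> {j, k, i} \<longrightarrow> g l = l" using F(5) by blast
  ultimately show ?thesis unfolding is_3cycle_def using F(2-4) by blast
qed

lemma is3_at: assumes g: "is_3cycle g i j k" and x: "g x \<noteq> x" shows "is_3cycle g x (g x) (g (g x))"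
proof -
  note F = is3_facts[OF g]
  consider "x = i" | "x = j" | "x = k" using is3_perm_moved[OF g x] by blast
  thus ?thesis
  proof cases
    case 1 thus ?thesis using g F by simp
  next
    case 2 thus ?thesis using is3_rot[OF g] F by simp
  next
    case 3 thus ?thesis using is3_rot[OF is3_rot[OF g]] F by simp
  qed
qed

lemma is3_nid: assumes "is_3cycle g i j k" shows "g \<noteq> id"
proof
  assume "g = id"
  thus False using is3_facts[OF assms] by simp
qed

lemma is3_adj: assumes g: "is_3cycle g i j k" and "g l \<noteq> l" "g m \<noteq> m" "l \<noteq> m"
  shows "m = g l \<or> l = g m"
proof -
  note F = is3_facts[OF g]
  have "l = i \<or> l = j \<or> l = k" "m = i \<or> m = j \<or> m = k"
    using is3_perm_moved[OF g] assms by blast+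
  thus ?thesis using F(1-4) assms(4) by (elim disjE) simp_all
qed

lemma conj3:
  assumes g: "is_3cycle g i j k" and c: "is_3cycle c p q r" and h: "h permutes UNIV"
    and hp: "h p = i" "h q = j" "h r = k"
  shows "h \<circ> c \<circ> inv h = g"
proof
  fix x
  have G: "g i = j" "g j = k" "g k = i" "\<And>l. l \<noteq> i \<Longrightarrow> l \<noteq> j \<Longrightarrow> l \<noteq> k \<Longrightarrow> g l = l"
    using g unfolding is_3cycle_def by auto
  have C: "c p = q" "c q = r" "c r = p" "\<And>l. l \<noteq> p \<Longrightarrow> l \<noteq> q \<Longrightarrow> l \<noteq> r \<Longrightarrow> c l = l"
    using c unfolding is_3cycle_def by auto
  define y where "y = inv h x"
  have y: "x = h y" unfolding y_def using h by (simp add: permutes_inverses)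
  have iy: "inv h x = y" unfolding y_def ..
  consider "y = p" | "y = q" | "y = r" | "y \<noteq> p" "y \<noteq> q" "y \<noteq> r" by blast
  thus "(h \<circ> c \<circ> inv h) x = g x"
  proof cases
    case 1 thus ?thesis using iy y hp C G by simp
  next
    case 2 thus ?thesis using iy y hp C G by simp
  next
    case 3 thus ?thesis using iy y hp C G by simp
  next
    case 4
    have "h y \<noteq> h p" "h y \<noteq> h q" "h y \<noteq> h r" using 4 inj_g[OF h] by simp_all
    hence "x \<noteq> i" "x \<noteq> j" "x \<noteq> k" using y hp by simp_all
    hence "g x = x" using G(4) by blast
    moreover have "c y = y" using C(4) 4 by blast
    ultimately show ?thesis using iy y by simp
  qed
qed

lemma id_conj: "h permutes UNIV \<Longrightarrow> h \<circ> id \<circ> inv h = id"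
  using permutes_inv_o(1) by simp

context fixes \<kappa> :: "'n::finite cochain" assumes pre: "pre_DOA_map \<kappa>"
begin

lemma kab: "g permutes UNIV \<Longrightarrow> alt_bilinear (\<kappa> g)"
  using pre unfolding pre_DOA_map_def by blast
lemma keq: "g permutes UNIV \<Longrightarrow> h permutes UNIV \<Longrightarrow>
    pact h (\<kappa> g v w) = \<kappa> (h \<circ> g \<circ> inv h) (pact h v) (pact h w)"
  using pre unfolding pre_DOA_map_def by blast
lemma kfix: "g permutes UNIV \<Longrightarrow> pact g (\<kappa> g v w) = \<kappa> g v w"
  using pre unfolding pre_DOA_map_def by blast
lemma kcoc: "g permutes UNIV \<Longrightarrow>
    sprod (\<kappa> g v2 v3) (pact g v1 - v1) + sprod (\<kappa> g v3 v1) (pact g v2 - v2)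
          + sprod (\<kappa> g v1 v2) (pact g v3 - v3) = 0"
  using pre unfolding pre_DOA_map_def by blast

lemma kinv: "g permutes UNIV \<Longrightarrow> \<kappa> g (pact g v) (pact g w) = \<kappa> g v w"
  using keq[of g g v w] kfix[of g v w] perm_self_conj[of g] by simp

lemma psi_main:
  assumes g: "g permutes UNIV" and ann: "\<And>P. pact g P = P \<Longrightarrow> ip P \<psi> = 0"
  shows "\<kappa> g v2 v3 $ r * ip (pact g v1 - v1) \<psi> + \<kappa> g v3 v1 $ r * ip (pact g v2 - v2) \<psi>
       + \<kappa> g v1 v2 $ r * ip (pact g v3 - v3) \<psi> = 0"
proof -
  define P1 where "P1 = \<kappa> g v2 v3"
  define P2 where "P2 = \<kappa> g v3 v1"
  define P3 where "P3 = \<kappa> g v1 v2"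
  define W1 where "W1 = pact g v1 - v1"
  define W2 where "W2 = pact g v2 - v2"
  define W3 where "W3 = pact g v3 - v3"
  have z: "ip P1 \<psi> = 0" "ip P2 \<psi> = 0" "ip P3 \<psi> = 0"
    unfolding P1_def P2_def P3_def by (rule ann, rule kfix[OF g])+
  have M: "sprod P1 W1 + sprod P2 W2 + sprod P3 W3 = 0"
    unfolding P1_def P2_def P3_def W1_def W2_def W3_def by (rule kcoc[OF g])
  have "(\<Sum>c\<in>UNIV. (sprod P1 W1 + sprod P2 W2 + sprod P3 W3) $ r $ c * \<psi> $ c) = 0"
    by (simp add: M)
  also have "(\<Sum>c\<in>UNIV. (sprod P1 W1 + sprod P2 W2 + sprod P3 W3) $ r $ c * \<psi> $ c)
     = P1 $ r * ip W1 \<psi> + W1 $ r * ip P1 \<psi> + P2 $ r * ip W2 \<psi> + W2 $ r * ip P2 \<psi>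
       + P3 $ r * ip W3 \<psi> + W3 $ r * ip P3 \<psi>"
    by (simp add: ip_def sum.distrib sum_distrib_left ring_distribs mult.assoc mult.left_commute)
  finally show ?thesis using z unfolding P1_def P2_def P3_def W1_def W2_def W3_def by simp
qed

lemma psi_zero:
  assumes g: "g permutes UNIV" and ann: "\<And>P. pact g P = P \<Longrightarrow> ip P \<psi> = 0"
    and c1: "ip (pact g vA - vA) \<psi> = 0" and c2: "ip (pact g vB - vB) \<psi> = 0"
    and c3: "ip (pact g vC - vC) \<psi> \<noteq> 0"
  shows "\<kappa> g vA vB = 0"
  unfolding vec_eq_iff
proof
  fix r
  show "\<kappa> g vA vB $ r = 0 $ r"
    using psi_main[OF g ann, of vB vC r vA] c1 c2 c3 by simp
qed



lemma ip_W: "g permutes UNIV \<Longrightarrow> ip (pact g (ebas x) - ebas x) \<psi> = \<psi> $ (g x) - \<psi> $ x"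
  by (simp add: pact_ebas)

lemma pact_add: "pact g (a + b) = pact g a + pact g b"
  unfolding vec_eq_iff by simp

lemma double_zero: "(x::complex^'n::finite) + x = 0 \<Longrightarrow> x = 0"
  unfolding vec_eq_iff by simp

lemma fixfix:
  assumes g: "g permutes UNIV" and ng: "g \<noteq> id" and u: "pact g u = u" and u': "pact g u' = u'"
  shows "\<kappa> g u u' = 0"
proof -
  obtain y where y: "g y \<noteq> y" using ng by (auto simp: fun_eq_iff)
  show ?thesis
  proof (rule psi_zero[OF g, where \<psi> = "ebas y - ebas (g y)" and vC = "ebas y"])
    fix P assume "pact g P = P"
    thus "ip P (ebas y - ebas (g y)) = 0" using fixed_comp[OF g] by simp
  next
    show "ip (pact g u - u) (ebas y - ebas (g y)) = 0" using u by simp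
    show "ip (pact g u' - u') (ebas y - ebas (g y)) = 0" using u' by simp
    show "ip (pact g (ebas y) - ebas y) (ebas y - ebas (g y)) \<noteq> 0"
      using y by (simp add: pact_ebas[OF g] ebas_comp)
  qed
qed

lemma fixU:
  assumes g: "g permutes UNIV" and ng: "g \<noteq> id" and u: "pact g u = u"
  shows "\<kappa> g u (ebas m) = 0"
proof (cases "g m = m")
  case True
  thus ?thesis using fixfix[OF g ng u] pact_ebas[OF g, of m] by simp
next
  case m1: False
  show ?thesis
  proof (cases "g (g m) = m")
    case False
    have d: "g (g m) \<noteq> g m" using m1 g by (metis permutes_inj injD)
    show ?thesis
    proof (rule psi_zero[OF g, where \<psi> = "ebas m + ebas (g m) - csmul 2 (ebas (g (g m)))"
          and vC = "ebas (g m)"])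
      fix P assume "pact g P = P"
      thus "ip P (ebas m + ebas (g m) - csmul 2 (ebas (g (g m)))) = 0"
        using fixed_comp[OF g, of P] by simp
    next
      show "ip (pact g u - u) (ebas m + ebas (g m) - csmul 2 (ebas (g (g m)))) = 0"
        using u by simp
      show "ip (pact g (ebas m) - ebas m) (ebas m + ebas (g m) - csmul 2 (ebas (g (g m)))) = 0"
        using m1 False d by (simp add: pact_ebas[OF g] ebas_comp)
      show "ip (pact g (ebas (g m)) - ebas (g m)) (ebas m + ebas (g m) - csmul 2 (ebas (g (g m)))) \<noteq> 0"
        using m1 False d by (simp add: pact_ebas[OF g] ebas_comp)
    qed
  next
    case True
    have ab: "alt_bilinear (\<kappa> g)" by (rule kab[OF g])
    have fx: "pact g (ebas m + ebas (g m)) = ebas m + ebas (g m)"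
      using True by (simp add: pact_add pact_ebas[OF g])
    have "\<kappa> g u (ebas m + ebas (g m)) = 0" by (rule fixfix[OF g ng u fx])
    hence s: "\<kappa> g u (ebas m) + \<kappa> g u (ebas (g m)) = 0" by (simp add: ab_addr[OF ab])
    have "\<kappa> g u (ebas (g m)) = \<kappa> g u (ebas m)"
      using kinv[OF g, of u "ebas m"] u by (simp add: pact_ebas[OF g])
    thus ?thesis using s double_zero by simp
  qed
qed

lemma fixU':
  assumes g: "g permutes UNIV" and ng: "g \<noteq> id" and u: "pact g u = u"
  shows "\<kappa> g (ebas m) u = 0"
  using ab_antisym[OF kab[OF g]] fixU[OF g ng u] by (metis neg_equal_0_iff_equal)


lemma not3_ex:
  assumes g: "g permutes UNIV" and n3: "\<not> (\<exists>i j k. is_3cycle g i j k)"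
    and l1: "g l \<noteq> l" and l2: "g (g l) \<noteq> l" and l3: "g (g (g l)) = l"
  shows "\<exists>y. g y \<noteq> y \<and> y \<noteq> l \<and> y \<noteq> g l \<and> y \<noteq> g (g l)"
proof (rule ccontr)
  assume a: "\<not> ?thesis"
  have fx: "\<forall>y. y \<notin> {l, g l, g (g l)} \<longrightarrow> g y = y"
  proof (intro allI impI)
    fix y assume y: "y \<notin> {l, g l, g (g l)}"
    show "g y = y"
    proof (rule ccontr)
      assume "g y \<noteq> y"
      hence "\<exists>y. g y \<noteq> y \<and> y \<noteq> l \<and> y \<noteq> g l \<and> y \<noteq> g (g l)" using y by auto
      thus False by (rule notE[OF a])
    qed
  qed
  have "g l \<noteq> g (g l)" using l1 inj_g[OF g] by simp
  hence d: "distinct [l, g l, g (g l)]" using l1 l2 by simp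
  have "is_3cycle g l (g l) (g (g l))" unfolding is_3cycle_def
  proof (intro conjI)
    show "distinct [l, g l, g (g l)]" by (rule d)
    show "g (g (g l)) = l" by (rule l3)
    show "\<forall>x. x \<notin> {l, g l, g (g l)} \<longrightarrow> g x = x" by (rule fx)
  qed (rule refl)+
  hence "\<exists>i j k. is_3cycle g i j k" by (intro exI)
  thus False using n3 by (rule notE[rotated])
qed

lemma adjacent:
  assumes g: "g permutes UNIV" and ng: "g \<noteq> id" and n3: "\<not> (\<exists>i j k. is_3cycle g i j k)"
    and l1: "g l \<noteq> l" and l2: "g (g l) \<noteq> l"
  shows "\<kappa> g (ebas l) (ebas (g l)) = 0"
proof (cases "g (g (g l)) = l")
  case False
  have d: "g (g l) \<noteq> g l" "g (g (g l)) \<noteq> g (g l)" "g (g (g l)) \<noteq> g l"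
    using l1 l2 inj_g[OF g] by auto
  show ?thesis
  proof (rule psi_zero[OF g, where \<psi> = "ebas l + ebas (g l) + ebas (g (g l)) - csmul 3 (ebas (g (g (g l))))"
        and vC = "ebas (g (g l))"])
    fix P assume "pact g P = P"
    thus "ip P (ebas l + ebas (g l) + ebas (g (g l)) - csmul 3 (ebas (g (g (g l))))) = 0"
      using fixed_comp[OF g, of P] by simp
  qed (use l1 l2 False d in \<open>simp_all add: pact_ebas[OF g] ebas_comp\<close>)
next
  case True
  obtain y where y: "g y \<noteq> y" "y \<noteq> l" "y \<noteq> g l" "y \<noteq> g (g l)"
    using not3_ex[OF g n3 l1 l2 True] by blast
  have "g y \<noteq> g (g (g l))" using y(4) inj_g[OF g] by simp
  hence gy: "g y \<noteq> l" "g y \<noteq> g l" "g y \<noteq> g (g l)"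
    using y True inj_g[OF g] by simp_all
  show ?thesis
  proof (rule psi_zero[OF g, where \<psi> = "ebas y - ebas (g y)" and vC = "ebas y"])
    fix P assume "pact g P = P"
    thus "ip P (ebas y - ebas (g y)) = 0" using fixed_comp[OF g] by simp
  qed (use y gy in \<open>simp_all add: pact_ebas[OF g] ebas_comp\<close>)
qed

lemma L3:
  assumes g: "g permutes UNIV" and ng: "g \<noteq> id" and n3: "\<not> (\<exists>i j k. is_3cycle g i j k)"
    and l1: "g l \<noteq> l" and l2: "g (g l) \<noteq> l" and ml: "m \<noteq> l"
  shows "\<kappa> g (ebas l) (ebas m) = 0"
proof -
  have ab: "alt_bilinear (\<kappa> g)" by (rule kab[OF g])
  have d: "g (g l) \<noteq> g l" using l1 inj_g[OF g] by auto
  show ?thesis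
  proof (cases "m = g l")
    case True thus ?thesis using adjacent[OF g ng n3 l1 l2] by simp
  next
    case m1: False
    show ?thesis
    proof (cases "g m = l")
      case True
      have "g (g m) \<noteq> m" using True m1 by auto
      hence "\<kappa> g (ebas m) (ebas (g m)) = 0" using adjacent[OF g ng n3, of m] True ml by auto
      thus ?thesis using True ab_antisym[OF ab, of "ebas l" "ebas m"] by simp
    next
      case m2: False
      show ?thesis
      proof (cases "m = g (g l)")
        case True
        have g3: "g (g (g l)) \<noteq> l" using True m2 by simp
        have d2: "g (g (g l)) \<noteq> g (g l)" "g (g (g l)) \<noteq> g l" using l1 l2 inj_g[OF g] by auto
        show ?thesis unfolding True
        proof (rule psi_zero[OF g, where \<psi> = "ebas l + ebas (g l) - ebas (g (g l)) - ebas (g (g (g l)))"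
            and vC = "ebas (g l)"])
          fix P assume "pact g P = P"
          thus "ip P (ebas l + ebas (g l) - ebas (g (g l)) - ebas (g (g (g l)))) = 0"
            using fixed_comp[OF g, of P] by simp
        qed (use l1 l2 g3 d d2 in \<open>simp_all add: pact_ebas[OF g] ebas_comp\<close>)
      next
        case m3: False
        have gm: "g m \<noteq> g l" "g m \<noteq> g (g l)" using ml m1 inj_g[OF g] by auto
        show ?thesis
        proof (rule psi_zero[OF g, where \<psi> = "ebas l + ebas (g l) - csmul 2 (ebas (g (g l)))"
            and vC = "ebas (g l)"])
          fix P assume "pact g P = P"
          thus "ip P (ebas l + ebas (g l) - csmul 2 (ebas (g (g l)))) = 0"
            using fixed_comp[OF g, of P] by simp
        qed (use l1 l2 d ml m1 m2 m3 gm in \<open>simp_all add: pact_ebas[OF g] ebas_comp\<close>)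
      qed
    qed
  qed
qed

lemma trans_conj:
  assumes g: "g permutes UNIV" and l2: "g (g l) = l"
  shows "Transposition.transpose l (g l) \<circ> g \<circ> inv (Transposition.transpose l (g l)) = g"
proof
  fix x
  have iv: "inv (Transposition.transpose l (g l)) = Transposition.transpose l (g l)" by simp
  consider "x = l" | "x = g l" | "x \<noteq> l" "x \<noteq> g l" by blast
  thus "(Transposition.transpose l (g l) \<circ> g \<circ> inv (Transposition.transpose l (g l))) x = g x"
  proof cases
    case 1
    thus ?thesis unfolding iv o_def using l2 by (simp only: transpose_apply_first)
  next
    case 2
    thus ?thesis unfolding iv o_def using l2 by (simp only: transpose_apply_second transpose_apply_first)
  next
    case 3
    have "g x \<noteq> g (g l)" "g x \<noteq> g l" using 3 inj_g[OF g] by simp_all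
    hence "g x \<noteq> l" "g x \<noteq> g l" using l2 by simp_all
    thus ?thesis unfolding iv o_def using 3 by simp
  qed
qed

lemma L2:
  assumes g: "g permutes UNIV" and ng: "g \<noteq> id" and l1: "g l \<noteq> l" and l2: "g (g l) = l"
  shows "\<kappa> g (ebas l) (ebas m) = 0"
proof -
  have ab: "alt_bilinear (\<kappa> g)" by (rule kab[OF g])
  consider "m = l" | "m = g l" | "m \<noteq> l" "m \<noteq> g l" by blast
  thus ?thesis
  proof cases
    case 1 thus ?thesis by (simp add: ab_diag[OF ab])
  next
    case 2
    have "\<kappa> g (ebas l) (ebas (g l)) = \<kappa> g (ebas (g l)) (ebas l)"
      using kinv[OF g, of "ebas l" "ebas (g l)"] l2 by (simp add: pact_ebas[OF g])
    hence "\<kappa> g (ebas l) (ebas (g l)) + \<kappa> g (ebas l) (ebas (g l)) = 0"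
      using ab_antisym[OF ab, of "ebas (g l)" "ebas l"] by simp
    thus ?thesis using 2 double_zero by simp
  next
    case 3
    define h where "h = Transposition.transpose l (g l)"
    have h: "h permutes UNIV" unfolding h_def by (rule permutes_swap_id) auto
    have hc: "h \<circ> g \<circ> inv h = g" unfolding h_def by (rule trans_conj[OF g l2])
    define X where "X = \<kappa> g (ebas l) (ebas m)"
    have hm: "h m = m" "h l = g l" using 3 by (auto simp: h_def)
    have e1: "pact h X = \<kappa> g (ebas (g l)) (ebas m)"
      unfolding X_def using keq[OF g h, of "ebas l" "ebas m"] hc hm by (simp add: pact_ebas[OF h])
    have fx: "pact g (ebas l + ebas (g l)) = ebas l + ebas (g l)"
      using l2 by (simp add: pact_add pact_ebas[OF g])
    have "\<kappa> g (ebas l + ebas (g l)) (ebas m) = 0" by (rule fixU[OF g ng fx])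
    hence "X + \<kappa> g (ebas (g l)) (ebas m) = 0" unfolding X_def by (simp add: ab_addl[OF ab])
    hence "X + pact h X = 0" using e1 by simp
    hence c: "X $ k + X $ (h k) = 0" for k
      using h by (auto simp: vec_eq_iff permutes_inverses h_def)
    have fX: "X $ (g l) = X $ l" using fixed_comp[OF g kfix[OF g]] unfolding X_def by blast
    have "X $ k = 0" for k
    proof -
      have "X $ l = 0" using c[of l] fX hm by simp
      moreover have "X $ (g l) = 0" using \<open>X $ l = 0\<close> fX by simp
      moreover have "k \<noteq> l \<Longrightarrow> k \<noteq> g l \<Longrightarrow> X $ k = 0"
        using c[of k] by (simp add: h_def)
      ultimately show ?thesis by blast
    qed
    thus ?thesis unfolding X_def by (simp add: vec_eq_iff)
  qed
qed

lemma zero_other: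
  assumes g: "g permutes UNIV" and ng: "g \<noteq> id" and n3: "\<not> (\<exists>i j k. is_3cycle g i j k)"
  shows "\<kappa> g (ebas l) (ebas m) = 0"
proof -
  have ab: "alt_bilinear (\<kappa> g)" by (rule kab[OF g])
  show ?thesis
  proof (cases "g l = l")
    case True
    thus ?thesis using fixU[OF g ng, of "ebas l" m] by (simp add: pact_ebas[OF g])
  next
    case l1: False
    show ?thesis
    proof (cases "g (g l) = l")
      case True thus ?thesis using L2[OF g ng l1] by blast
    next
      case False
      thus ?thesis using L3[OF g ng n3 l1 False, of m] ab_diag[OF ab] by (cases "m = l") auto
    qed
  qed
qed



lemma id_pair:
  assumes card: "CARD('n) \<ge> 3" and lm: "l \<noteq> m" and pq: "p \<noteq> q"
  shows "\<kappa> id (ebas l) (ebas (m::'n)) $ l = \<kappa> id (ebas p) (ebas q) $ p"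
proof -
  obtain r where r: "r \<noteq> p" "r \<noteq> q" using third_point[OF card] by blast
  obtain k where k: "k \<noteq> l" "k \<noteq> m" using third_point[OF card] by blast
  obtain h where h: "h permutes UNIV" "h p = l" "h q = m" "h r = k"
    using perm3[of p q r l m k] r k pq lm by auto
  have "pact h (\<kappa> id (ebas p) (ebas q)) = \<kappa> id (ebas l) (ebas m)"
    using keq[OF permutes_id h(1), of "ebas p" "ebas q"] id_conj[OF h(1)] h
    by (simp add: pact_ebas[OF h(1)])
  hence "\<kappa> id (ebas l) (ebas m) $ l = \<kappa> id (ebas p) (ebas q) $ (inv h l)" by (metis pact_comp)
  moreover have "inv h l = p" using h permutes_inverses(2)[OF h(1), of p] by simp
  ultimately show ?thesis by simp
qed

lemma id_other:
  assumes lm: "l \<noteq> m" and y: "y \<noteq> l" "y \<noteq> m"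
  shows "\<kappa> id (ebas l) (ebas m) $ y = 0"
proof -
  define h where "h = tr l m"
  have h: "h permutes UNIV" unfolding h_def by (rule permutes_swap_id) auto
  have ab: "alt_bilinear (\<kappa> id)" by (rule kab[OF permutes_id])
  have hlm: "h l = m" "h m = l" by (simp_all add: h_def)
  have "pact h (\<kappa> id (ebas l) (ebas m)) = \<kappa> id (ebas m) (ebas l)"
    using keq[OF permutes_id h, of "ebas l" "ebas m"] id_conj[OF h]
    by (simp add: pact_ebas[OF h] hlm)
  also have "\<dots> = - \<kappa> id (ebas l) (ebas m)" by (rule ab_antisym[OF ab])
  finally have e: "pact h (\<kappa> id (ebas l) (ebas m)) $ y = (- \<kappa> id (ebas l) (ebas m)) $ y" by simp
  have "inv h y = y" using y by (simp add: h_def)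
  thus ?thesis using e by simp
qed

lemma id_case:
  assumes card: "CARD('n) \<ge> 3" and pq: "p \<noteq> q"
  shows "\<kappa> id (ebas l) (ebas (m::'n)) = csmul (\<kappa> id (ebas p) (ebas q) $ p) (ebas l - ebas m)"
proof (cases "l = m")
  case True thus ?thesis using ab_diag[OF kab[OF permutes_id]] by (simp add: vec_eq_iff)
next
  case False
  have ab: "alt_bilinear (\<kappa> id)" by (rule kab[OF permutes_id])
  show ?thesis unfolding vec_eq_iff
  proof
    fix y
    consider "y = l" | "y = m" | "y \<noteq> l" "y \<noteq> m" by blast
    thus "\<kappa> id (ebas l) (ebas m) $ y = csmul (\<kappa> id (ebas p) (ebas q) $ p) (ebas l - ebas m) $ y"
    proof cases
      case 1 thus ?thesis using id_pair[OF card False pq] False by (simp add: ebas_comp)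
    next
      case 2
      have "\<kappa> id (ebas l) (ebas m) $ m = - \<kappa> id (ebas m) (ebas l) $ m"
        using ab_antisym[OF ab, of "ebas l" "ebas m"] by simp
      thus ?thesis using 2 id_pair[OF card _ pq, of m l] False by (simp add: ebas_comp)
    next
      case 3 thus ?thesis using id_other[OF False] by (simp add: ebas_comp)
    qed
  qed
qed

lemma c3_X:
  assumes d: "distinct [p, q, r]"
  shows "\<kappa> (c0 p q r) (ebas p) (ebas q) $ q = \<kappa> (c0 p q r) (ebas p) (ebas q) $ p"
    "\<kappa> (c0 p q r) (ebas p) (ebas q) $ r = \<kappa> (c0 p q r) (ebas p) (ebas q) $ p"
    "t \<notin> {p, q, r} \<Longrightarrow> t0 \<notin> {p, q, r} \<Longrightarrow>
      \<kappa> (c0 p q r) (ebas p) (ebas q) $ t = \<kappa> (c0 p q r) (ebas p) (ebas q) $ t0"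
proof -
  let ?c = "c0 p q r"
  let ?X = "\<kappa> ?c (ebas p) (ebas q)"
  note F = is3_facts[OF c0_3cycle[OF d]]
  have fx: "?X $ (?c x) = ?X $ x" for x using fixed_comp[OF c0_perm kfix[OF c0_perm]] by blast
  show "?X $ q = ?X $ p" using fx[of p] F by simp
  show "?X $ r = ?X $ p" using fx[of q] fx[of p] F by simp
  assume t: "t \<notin> {p, q, r}" and t0: "t0 \<notin> {p, q, r}"
  define h where "h = tr t t0"
  have h: "h permutes UNIV" unfolding h_def by (rule permutes_swap_id) auto
  have hp: "h p = p" "h q = q" "h r = r" using t t0 by (auto simp: h_def)
  have hc: "h \<circ> ?c \<circ> inv h = ?c"
    by (rule conj3[OF c0_3cycle[OF d] c0_3cycle[OF d] h hp])
  have "pact h ?X = ?X" using keq[OF c0_perm[of p q r] h, of "ebas p" "ebas q"] hc hp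
    by (simp add: pact_ebas[OF h])
  hence "pact h ?X $ t0 = ?X $ t0" by simp
  moreover have "inv h t0 = t" by (simp add: h_def)
  ultimately show "?X $ t = ?X $ t0" by simp
qed

lemma c3_case:
  assumes d: "distinct [p, q, r]" and g: "is_3cycle g i j k" and gp: "g permutes UNIV"
    and a: "a = \<kappa> (c0 p q r) (ebas p) (ebas q) $ p"
    and b: "b = \<kappa> (c0 p q r) (ebas p) (ebas q) $ (SOME t. t \<notin> {p, q, r})"
  shows "\<kappa> g (ebas l) (ebas m) = kbasis a b a1 g l m"
proof -
  have ng: "g \<noteq> id" by (rule is3_nid[OF g])
  have ex: "\<exists>i j k. is_3cycle g i j k" using g by blast
  have ab: "alt_bilinear (\<kappa> g)" by (rule kab[OF gp])
  define T where "T = (\<chi> k. if g k \<noteq> k then a else b)"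
  have kb: "kbasis a b a1 g l m = (if g l = l \<or> g m = m then 0 else if m = g l then T
         else if l = g m then - T else 0)"
    unfolding kbasis_def T_def using ng ex by simp
  let ?X = "\<kappa> (c0 p q r) (ebas p) (ebas q)"
  have adj: "\<kappa> g (ebas x) (ebas (g x)) = T" if x: "g x \<noteq> x" for x
  proof -
    have g3: "is_3cycle g x (g x) (g (g x))" by (rule is3_at[OF g x])
    note F = is3_facts[OF g3]
    obtain h where h: "h permutes UNIV" "h p = x" "h q = g x" "h r = g (g x)"
      using perm3[OF d F(1)] by blast
    have hc: "h \<circ> c0 p q r \<circ> inv h = g" by (rule conj3[OF g3 c0_3cycle[OF d] h])
    have e: "pact h ?X = \<kappa> g (ebas x) (ebas (g x))"
      using keq[OF c0_perm[of p q r] h(1), of "ebas p" "ebas q"] hc h by (simp add: pact_ebas[OF h(1)])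
    show ?thesis unfolding vec_eq_iff
    proof
      fix y
      define z where "z = inv h y"
      have yz: "y = h z" unfolding z_def using h(1) by (simp add: permutes_inverses)
      have "\<kappa> g (ebas x) (ebas (g x)) $ y = ?X $ z" using e[symmetric] unfolding z_def by simp
      also have "\<dots> = T $ y"
      proof (cases "z \<in> {p, q, r}")
        case True
        hence "y \<in> {x, g x, g (g x)}" using yz h by auto
        hence "g y \<noteq> y" using F(1-4) by auto
        moreover have "?X $ z = a" using True c3_X(1,2)[OF d] a by auto
        ultimately show ?thesis by (simp add: T_def)
      next
        case False
        have "h z \<noteq> h p" "h z \<noteq> h q" "h z \<noteq> h r" using False inj_g[OF h(1)] by auto
        hence "y \<notin> {x, g x, g (g x)}" unfolding yz h(2-4) by simp
        hence "g y = y" using F(5) by auto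
        moreover have "\<exists>t. t \<notin> {p, q, r}" using False by blast
        hence "(SOME t. t \<notin> {p, q, r}) \<notin> {p, q, r}" by (rule someI_ex)
        hence "?X $ z = b" using c3_X(3)[OF d False] b by simp
        ultimately show ?thesis by (simp add: T_def)
      qed
      finally show "\<kappa> g (ebas x) (ebas (g x)) $ y = T $ y" .
    qed
  qed
  show ?thesis
  proof (cases "g l = l \<or> g m = m")
    case True
    thus ?thesis using kb fixU[OF gp ng, of "ebas l" m] fixU'[OF gp ng, of "ebas m" l]
      by (auto simp: pact_ebas[OF gp])
  next
    case nf: False
    show ?thesis
    proof (cases "l = m")
      case True thus ?thesis using kb nf ab_diag[OF ab] by simp
    next
      case lm: False
      have "m = g l \<or> l = g m" using is3_adj[OF g] nf lm by blast
      thus ?thesis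
      proof
        assume "m = g l" thus ?thesis using kb nf adj[of l] by simp
      next
        assume ml: "l = g m"
        have "g (g m) \<noteq> m" using is3_facts(1)[OF is3_at[OF g, of m]] nf by auto
        hence "m \<noteq> g l" using ml by auto
        thus ?thesis using kb nf ml adj[of m] ab_antisym[OF ab, of "ebas l" "ebas m"] by simp
      qed
    qed
  qed
qed


lemma basis_all:
  assumes d: "distinct [p, q, r]" and card: "CARD('n) \<ge> 3" and gp: "g permutes UNIV"
    and a1: "a1 = \<kappa> id (ebas p) (ebas q) $ p"
    and a: "a = \<kappa> (c0 p q r) (ebas p) (ebas q) $ p"
    and b: "b = \<kappa> (c0 p q r) (ebas p) (ebas q) $ (SOME t. t \<notin> {p, q, r})"
  shows "\<kappa> g (ebas l) (ebas (m::'n)) = kbasis a b a1 g l m"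
proof (cases "g = id")
  case True
  have "p \<noteq> q" using d by simp
  thus ?thesis using id_case[OF card, of p q l m] True a1 by (simp add: kbasis_def)
next
  case ng: False
  show ?thesis
  proof (cases "\<exists>i j k. is_3cycle g i j k")
    case True
    then obtain i j k where "is_3cycle g i j k" by blast
    thus ?thesis using c3_case[OF d _ gp a b] by blast
  next
    case False
    have "kbasis a b a1 g l m = 0" unfolding kbasis_def
      by (subst if_not_P[OF ng], subst if_not_P[OF False], rule refl)
    thus ?thesis using zero_other[OF gp ng False] by simp
  qed
qed

lemma forward:
  assumes card: "CARD('n) \<ge> 3"
  shows "\<exists>a b a1. \<forall>g. g permutes (UNIV::'n set) \<longrightarrow> \<kappa> g = kform a b a1 g"
proof -
  obtain p q r :: 'n where d: "distinct [p, q, r]" using three_points[OF card] by blast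
  define a1 where "a1 = \<kappa> id (ebas p) (ebas q) $ p"
  define a where "a = \<kappa> (c0 p q r) (ebas p) (ebas q) $ p"
  define b where "b = \<kappa> (c0 p q r) (ebas p) (ebas q) $ (SOME t. t \<notin> {p, q, r})"
  have "\<kappa> g = kform a b a1 g" if gp: "g permutes UNIV" for g
  proof (intro ext)
    fix v w
    show "\<kappa> g v w = kform a b a1 g v w"
      unfolding ab_expand[OF kab[OF gp], of v w] kform_def
      using basis_all[OF d card gp a1_def a_def b_def] by simp
  qed
  thus ?thesis by blast
qed

end


definition D3 :: "'n \<Rightarrow> 'n \<Rightarrow> 'n \<Rightarrow> complex^'n::finite \<Rightarrow> complex^'n \<Rightarrow> complex" where
  "D3 i j k v w = v$i*w$j + v$j*w$k + v$k*w$i - v$j*w$i - v$k*w$j - v$i*w$k"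

definition Tv :: "complex \<Rightarrow> complex \<Rightarrow> ('n \<Rightarrow> 'n) \<Rightarrow> complex^'n::finite" where
  "Tv a b g = (\<chi> k. if g k \<noteq> k then a else b)"

definition Ssum :: "complex^'n::finite \<Rightarrow> complex" where
  "Ssum v = (\<Sum>k\<in>UNIV. v $ k)"

lemma kform_comp: "kform a b a1 g v w $ y = (\<Sum>l\<in>UNIV. \<Sum>m\<in>UNIV. v $ l * w $ m * kbasis a b a1 g l m $ y)"
  by (simp add: kform_def sum_component)

lemma dsum: "(\<Sum>l\<in>UNIV. \<Sum>m\<in>UNIV. v $ l * w $ m * (ebas i $ l * ebas j $ m)) = v $ i * (w::complex^'n::finite) $ j"
proof -
  have "(\<Sum>l\<in>UNIV. \<Sum>m\<in>UNIV. v $ l * w $ m * (ebas i $ l * ebas j $ m))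
      = (\<Sum>l\<in>UNIV. v $ l * ebas i $ l) * (\<Sum>m\<in>UNIV. w $ m * ebas j $ m)"
    by (simp add: sum_product mult_ac)
  also have "\<dots> = ip v (ebas i) * ip w (ebas j)" by (simp add: ip_def)
  finally show ?thesis by simp
qed

lemma kbasis_id: "kbasis a b a1 id l m $ y = a1 * (ebas l $ y - ebas m $ y)"
  by (simp add: kbasis_def)

lemma kform_id: "kform a b a1 id v w $ y = a1 * (v $ y * Ssum w - w $ y * Ssum v)"
proof -
  have e: "ebas l $ y = ebas y $ l" for l :: 'a by (simp add: ebas_comp)
  have "kform a b a1 id v w $ y = (\<Sum>l\<in>UNIV. \<Sum>m\<in>UNIV.
        a1 * (v $ l * w $ m * (ebas y $ l * 1)) - a1 * (v $ l * w $ m * (1 * ebas y $ m)))"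
    unfolding kform_comp kbasis_id by (simp add: e ring_distribs mult_ac)
  also have "\<dots> = a1 * (\<Sum>l\<in>UNIV. \<Sum>m\<in>UNIV. v $ l * w $ m * (ebas y $ l * 1))
       - a1 * (\<Sum>l\<in>UNIV. \<Sum>m\<in>UNIV. v $ l * w $ m * (1 * ebas y $ m))"
    by (simp add: sum_subtractf sum_distrib_left)
  also have "(\<Sum>l\<in>UNIV. \<Sum>m\<in>UNIV. v $ l * w $ m * (ebas y $ l * 1)) = v $ y * Ssum w"
  proof -
    have "(\<Sum>l\<in>UNIV. \<Sum>m\<in>UNIV. v $ l * w $ m * (ebas y $ l * 1))
        = (\<Sum>l\<in>UNIV. v $ l * ebas y $ l) * (\<Sum>m\<in>UNIV. w $ m)"
      unfolding sum_product by (simp add: mult_ac)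
    thus ?thesis by (simp add: Ssum_def ip_def[symmetric])
  qed
  also have "(\<Sum>l\<in>UNIV. \<Sum>m\<in>UNIV. v $ l * w $ m * (1 * ebas y $ m)) = w $ y * Ssum v"
  proof -
    have "(\<Sum>l\<in>UNIV. \<Sum>m\<in>UNIV. v $ l * w $ m * (1 * ebas y $ m))
        = (\<Sum>l\<in>UNIV. v $ l) * (\<Sum>m\<in>UNIV. w $ m * ebas y $ m)"
      unfolding sum_product by (simp add: mult_ac)
    thus ?thesis by (simp add: Ssum_def ip_def[symmetric])
  qed
  finally have "kform a b a1 id v w $ y = a1 * (v $ y * Ssum w) - a1 * (w $ y * Ssum v)" .
  thus ?thesis by (simp only: right_diff_distrib)
qed

lemma kbasis_3:
  assumes g: "is_3cycle g i j k"
  shows "kbasis a b a1 g l m $ y = Tv a b g $ y * (ebas i $ l * ebas j $ m + ebas j $ l * ebas k $ m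
      + ebas k $ l * ebas i $ m - ebas j $ l * ebas i $ m - ebas k $ l * ebas j $ m - ebas i $ l * ebas k $ m)"
proof -
  note F = is3_facts[OF g]
  have ng: "g \<noteq> id" by (rule is3_nid[OF g])
  have ex: "\<exists>i j k. is_3cycle g i j k" using g by blast
  have kb: "kbasis a b a1 g l m = (if g l = l \<or> g m = m then 0 else if m = g l then Tv a b g
         else if l = g m then - Tv a b g else 0)"
    unfolding kbasis_def Tv_def using ng ex by simp
  consider "l \<noteq> i" "l \<noteq> j" "l \<noteq> k" | "m \<noteq> i" "m \<noteq> j" "m \<noteq> k"
    | "l = i \<or> l = j \<or> l = k" "m = i \<or> m = j \<or> m = k" by blast
  thus ?thesis
  proof cases
    case 1 thus ?thesis using kb F(5)[of l] by (simp add: ebas_comp)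
  next
    case 2 thus ?thesis using kb F(5)[of m] by (simp add: ebas_comp)
  next
    case 3
    have dd: "i \<noteq> j" "j \<noteq> i" "i \<noteq> k" "k \<noteq> i" "j \<noteq> k" "k \<noteq> j" using F(1) by auto
    from 3 show ?thesis unfolding kb using F(2-4) dd by (elim disjE) (simp_all add: ebas_comp)
  qed
qed

lemma kform_3:
  assumes g: "is_3cycle g i j k"
  shows "kform a b a1 g v w = csmul (D3 i j k v w) (Tv a b g)"
  unfolding vec_eq_iff
proof
  fix y
  have "kform a b a1 g v w $ y = Tv a b g $ y *
     ((\<Sum>l\<in>UNIV. \<Sum>m\<in>UNIV. v $ l * w $ m * (ebas i $ l * ebas j $ m))
    + (\<Sum>l\<in>UNIV. \<Sum>m\<in>UNIV. v $ l * w $ m * (ebas j $ l * ebas k $ m))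
    + (\<Sum>l\<in>UNIV. \<Sum>m\<in>UNIV. v $ l * w $ m * (ebas k $ l * ebas i $ m))
    - (\<Sum>l\<in>UNIV. \<Sum>m\<in>UNIV. v $ l * w $ m * (ebas j $ l * ebas i $ m))
    - (\<Sum>l\<in>UNIV. \<Sum>m\<in>UNIV. v $ l * w $ m * (ebas k $ l * ebas j $ m))
    - (\<Sum>l\<in>UNIV. \<Sum>m\<in>UNIV. v $ l * w $ m * (ebas i $ l * ebas k $ m)))"
    unfolding kform_comp kbasis_3[OF g]
    by (simp add: sum_distrib_left sum_subtractf sum.distrib ring_distribs mult_ac)
  thus "kform a b a1 g v w $ y = csmul (D3 i j k v w) (Tv a b g) $ y"
    unfolding dsum by (simp add: D3_def mult_ac)
qed

lemma kform_other:
  assumes "g \<noteq> id" "\<not> (\<exists>i j k. is_3cycle g i j k)"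
  shows "kform a b a1 g v w = 0"
proof -
  have "kbasis a b a1 g l m = 0" for l m unfolding kbasis_def
    by (subst if_not_P[OF assms(1)], subst if_not_P[OF assms(2)], rule refl)
  thus ?thesis unfolding vec_eq_iff kform_comp by simp
qed


lemma kform_addl: "kform a b a1 g (u + v) w = kform a b a1 g u w + kform a b a1 g v w"
  unfolding vec_eq_iff by (simp add: kform_comp ring_distribs sum.distrib)
lemma kform_addr: "kform a b a1 g w (u + v) = kform a b a1 g w u + kform a b a1 g w v"
  unfolding vec_eq_iff by (simp add: kform_comp ring_distribs sum.distrib)
lemma kform_smull: "kform a b a1 g (csmul c u) w = csmul c (kform a b a1 g u w)"
  unfolding vec_eq_iff by (simp add: kform_comp sum_distrib_left mult_ac)
lemma kform_smulr: "kform a b a1 g w (csmul c u) = csmul c (kform a b a1 g w u)"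
  unfolding vec_eq_iff by (simp add: kform_comp sum_distrib_left mult_ac)

lemma kform_diag: "kform a b a1 g v v = 0"
proof (cases "g = id")
  case True thus ?thesis unfolding vec_eq_iff by (simp add: kform_id)
next
  case False
  show ?thesis
  proof (cases "\<exists>i j k. is_3cycle g i j k")
    case True
    then obtain i j k where g3: "is_3cycle g i j k" by blast
    show ?thesis unfolding kform_3[OF g3] vec_eq_iff by (simp add: D3_def)
  next
    case n3: False thus ?thesis using kform_other[OF False n3] by simp
  qed
qed

lemma kform_ab: "alt_bilinear (kform a b a1 g)"
  unfolding alt_bilinear_def clinear_map_def
  by (simp add: kform_addl kform_addr kform_smull kform_smulr kform_diag)

lemma is3_conj:
  assumes g: "is_3cycle g i j k" and h: "h permutes UNIV"
  shows "is_3cycle (h \<circ> g \<circ> inv h) (h i) (h j) (h k)"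
proof -
  note F = is3_facts[OF g]
  have iv: "inv h (h x) = x" for x using h by (simp add: permutes_inverses)
  have "distinct [h i, h j, h k]" using F(1) inj_g[OF h] by auto
  moreover have "(h \<circ> g \<circ> inv h) (h i) = h j" "(h \<circ> g \<circ> inv h) (h j) = h k"
     "(h \<circ> g \<circ> inv h) (h k) = h i" using F(2-4) iv by simp_all
  moreover have "\<forall>x. x \<notin> {h i, h j, h k} \<longrightarrow> (h \<circ> g \<circ> inv h) x = x"
  proof (intro allI impI)
    fix x assume x: "x \<notin> {h i, h j, h k}"
    define z where "z = inv h x"
    have xz: "x = h z" unfolding z_def using h by (simp add: permutes_inverses)
    have "z \<noteq> i" "z \<noteq> j" "z \<noteq> k" using x xz by auto
    hence "g z = z" using F(5) by blast
    thus "(h \<circ> g \<circ> inv h) x = x" using xz iv by simp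
  qed
  ultimately show ?thesis unfolding is_3cycle_def by blast
qed

lemma conj_back:
  assumes h: "h permutes UNIV"
  shows "inv h \<circ> (h \<circ> g \<circ> inv h) \<circ> inv (inv h) = g"
proof -
  have "inv (inv h) = h" using h by (simp add: permutes_inv_inv)
  moreover have "inv h \<circ> h = id" "h \<circ> inv h = id" using permutes_inv_o[OF h] by auto
  ultimately show ?thesis by (simp add: o_assoc) (metis comp_id id_comp o_assoc)
qed

lemma Ssum_pact: "h permutes UNIV \<Longrightarrow> Ssum (pact h v) = Ssum v"
  unfolding Ssum_def using sum.permute[OF permutes_inv, of h UNIV "\<lambda>k. v $ k"]
  by (simp add: o_def)

lemma pact_csmul: "pact h (csmul c v) = csmul c (pact h v)"
  unfolding vec_eq_iff by simp

lemma pact_zero: "pact h 0 = 0"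
  unfolding vec_eq_iff by simp

lemma kform_equiv:
  assumes g: "g permutes UNIV" and h: "h permutes UNIV"
  shows "pact h (kform a b a1 g v w) = kform a b a1 (h \<circ> g \<circ> inv h) (pact h v) (pact h w)"
proof -
  have iv: "inv h (h x) = x" for x using h by (simp add: permutes_inverses)
  have hi: "h (inv h x) = x" for x using h by (simp add: permutes_inverses)
  show ?thesis
  proof (cases "g = id")
    case True
    show ?thesis unfolding True id_conj[OF h] vec_eq_iff
      by (simp add: kform_id Ssum_pact[OF h])
  next
    case ng: False
    show ?thesis
    proof (cases "\<exists>i j k. is_3cycle g i j k")
      case True
      then obtain i j k where g3: "is_3cycle g i j k" by blast
      have g3': "is_3cycle (h \<circ> g \<circ> inv h) (h i) (h j) (h k)" by (rule is3_conj[OF g3 h])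
      have "D3 (h i) (h j) (h k) (pact h v) (pact h w) = D3 i j k v w"
        by (simp add: D3_def iv)
      moreover have "pact h (Tv a b g) = Tv a b (h \<circ> g \<circ> inv h)"
        unfolding vec_eq_iff Tv_def
      proof
        fix y
        have "h (g (inv h y)) \<noteq> y \<longleftrightarrow> g (inv h y) \<noteq> inv h y"
          using inj_g[OF h, of "g (inv h y)" "inv h y"] hi[of y] by simp
        thus "pact h (\<chi> k. if g k \<noteq> k then a else b) $ y =
           (\<chi> k. if (h \<circ> g \<circ> inv h) k \<noteq> k then a else b) $ y" by simp
      qed
      ultimately show ?thesis unfolding kform_3[OF g3] kform_3[OF g3'] by (simp add: pact_csmul)
    next
      case n3: False
      have ng': "h \<circ> g \<circ> inv h \<noteq> id"
      proof
        assume "h \<circ> g \<circ> inv h = id"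
        hence "inv h \<circ> (h \<circ> g \<circ> inv h) \<circ> inv (inv h) = id"
          using id_conj[OF permutes_inv[OF h]] by simp
        thus False using conj_back[OF h] ng by simp
      qed
      have n3': "\<not> (\<exists>i j k. is_3cycle (h \<circ> g \<circ> inv h) i j k)"
      proof
        assume "\<exists>i j k. is_3cycle (h \<circ> g \<circ> inv h) i j k"
        then obtain i j k where "is_3cycle (h \<circ> g \<circ> inv h) i j k" by blast
        from is3_conj[OF this permutes_inv[OF h]] have "is_3cycle g (inv h i) (inv h j) (inv h k)"
          using conj_back[OF h] by simp
        thus False using n3 by blast
      qed
      show ?thesis using kform_other[OF ng n3] kform_other[OF ng' n3'] by (simp add: pact_zero)
    qed
  qed
qed

lemma kform_fixed:
  assumes g: "g permutes UNIV"
  shows "pact g (kform a b a1 g v w) = kform a b a1 g v w"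
proof (cases "g = id")
  case True thus ?thesis by (simp add: vec_eq_iff)
next
  case ng: False
  show ?thesis
  proof (cases "\<exists>i j k. is_3cycle g i j k")
    case True
    then obtain i j k where g3: "is_3cycle g i j k" by blast
    have "pact g (Tv a b g) = Tv a b g" unfolding vec_eq_iff Tv_def
    proof
      fix y
      have "g (inv g y) = y" using g by (simp add: permutes_inverses)
      hence "g (inv g y) \<noteq> inv g y \<longleftrightarrow> g y \<noteq> y" using inj_g[OF g, of y "inv g y"] by auto
      thus "pact g (\<chi> k. if g k \<noteq> k then a else b) $ y = (\<chi> k. if g k \<noteq> k then a else b) $ y"
        by simp
    qed
    thus ?thesis unfolding kform_3[OF g3] by (simp add: pact_csmul)
  next
    case n3: False thus ?thesis using kform_other[OF ng n3] by (simp add: pact_zero)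
  qed
qed


lemma Z_zero:
  assumes g3: "is_3cycle g i j k" and g: "g permutes UNIV"
  shows "D3 i j k v2 v3 * (v1 $ inv g y - v1 $ y) + D3 i j k v3 v1 * (v2 $ inv g y - v2 $ y)
       + D3 i j k v1 v2 * (v3 $ inv g y - v3 $ y) = 0"
proof -
  note F = is3_facts[OF g3]
  have iv: "inv g (g x) = x" for x using g by (simp add: permutes_inverses)
  consider "y = i" | "y = j" | "y = k" | "y \<noteq> i" "y \<noteq> j" "y \<noteq> k" by blast
  thus ?thesis
  proof cases
    case 1
    have "inv g i = k" using iv[of k] F(4) by simp
    thus ?thesis using 1 by (simp add: D3_def algebra_simps)
  next
    case 2
    have "inv g j = i" using iv[of i] F(2) by simp
    thus ?thesis using 2 by (simp add: D3_def algebra_simps)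
  next
    case 3
    have "inv g k = j" using iv[of j] F(3) by simp
    thus ?thesis using 3 by (simp add: D3_def algebra_simps)
  next
    case 4
    have "inv g y = y" using iv[of y] F(5)[OF 4] by simp
    thus ?thesis by simp
  qed
qed

lemma kform_coc:
  assumes g: "g permutes UNIV"
  shows "sprod (kform a b a1 g v2 v3) (pact g v1 - v1) + sprod (kform a b a1 g v3 v1) (pact g v2 - v2)
          + sprod (kform a b a1 g v1 v2) (pact g v3 - v3) = 0"
proof (cases "g = id")
  case True thus ?thesis by (simp add: vec_eq_iff)
next
  case ng: False
  show ?thesis
  proof (cases "\<exists>i j k. is_3cycle g i j k")
    case True
    then obtain i j k where g3: "is_3cycle g i j k" by blast
    define Z where "Z y = D3 i j k v2 v3 * (v1 $ inv g y - v1 $ y) + D3 i j k v3 v1 * (v2 $ inv g y - v2 $ y)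
       + D3 i j k v1 v2 * (v3 $ inv g y - v3 $ y)" for y
    have Z: "Z y = 0" for y unfolding Z_def by (rule Z_zero[OF g3 g])
    show ?thesis unfolding vec_eq_iff kform_3[OF g3]
    proof (intro allI)
      fix r c
      have "(sprod (csmul (D3 i j k v2 v3) (Tv a b g)) (pact g v1 - v1) +
          sprod (csmul (D3 i j k v3 v1) (Tv a b g)) (pact g v2 - v2) +
          sprod (csmul (D3 i j k v1 v2) (Tv a b g)) (pact g v3 - v3)) $ r $ c
          = Tv a b g $ r * Z c + Tv a b g $ c * Z r"
        unfolding Z_def by (simp add: algebra_simps)
      thus "(sprod (csmul (D3 i j k v2 v3) (Tv a b g)) (pact g v1 - v1) +
          sprod (csmul (D3 i j k v3 v1) (Tv a b g)) (pact g v2 - v2) +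
          sprod (csmul (D3 i j k v1 v2) (Tv a b g)) (pact g v3 - v3)) $ r $ c = 0 $ r $ c"
        using Z by simp
    qed
  next
    case n3: False thus ?thesis using kform_other[OF ng n3] by (simp add: vec_eq_iff)
  qed
qed

theorem corollary4p7:
  fixes \<kappa> :: "'n::finite cochain"
  assumes "CARD('n) \<ge> 3"
  shows "pre_DOA_map \<kappa> \<longleftrightarrow>
    (\<exists>a b a1. \<forall>g. g permutes (UNIV::'n set) \<longrightarrow> \<kappa> g = kform a b a1 g)"
proof
  assume "pre_DOA_map \<kappa>"
  thus "\<exists>a b a1. \<forall>g. g permutes (UNIV::'n set) \<longrightarrow> \<kappa> g = kform a b a1 g"
    using forward assms by blast
next
  assume "\<exists>a b a1. \<forall>g. g permutes (UNIV::'n set) \<longrightarrow> \<kappa> g = kform a b a1 g"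
  then obtain a b a1 where H: "\<And>g. g permutes (UNIV::'n set) \<Longrightarrow> \<kappa> g = kform a b a1 g" by blast
  show "pre_DOA_map \<kappa>" unfolding pre_DOA_map_def
  proof (intro conjI allI impI)
    fix g :: "'n \<Rightarrow> 'n" assume g: "g permutes UNIV"
    show "alt_bilinear (\<kappa> g)" using H[OF g] kform_ab by simp
  next
    fix g h :: "'n \<Rightarrow> 'n" and v w assume g: "g permutes UNIV" and h: "h permutes UNIV"
    show "pact h (\<kappa> g v w) = \<kappa> (h \<circ> g \<circ> inv h) (pact h v) (pact h w)"
      using H[OF g] H[OF perm_conj[OF g h]] kform_equiv[OF g h] by simp
  next
    fix g :: "'n \<Rightarrow> 'n" and v w assume g: "g permutes UNIV"
    show "pact g (\<kappa> g v w) = \<kappa> g v w" using H[OF g] kform_fixed[OF g] by simp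
  next
    fix g :: "'n \<Rightarrow> 'n" and v1 v2 v3 assume g: "g permutes UNIV"
    show "sprod (\<kappa> g v2 v3) (pact g v1 - v1) + sprod (\<kappa> g v3 v1) (pact g v2 - v2)
          + sprod (\<kappa> g v1 v2) (pact g v3 - v3) = 0"
      using H[OF g] kform_coc[OF g] by simp
  qed
qed

end
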